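(* Let $s\ge5$ be a fixed integer. There exists a unique real number $\rho(s)>2$ such that $L(\rho(s),s)=0$. Moreover, \[ L(r,s)<0 \text{ for } r\in[2,\rho(s)),\qquad L(r,s)>0 \text{ for } r\in(\rho(s),\infty). \] Furthermore, if $s\ge6$, then $\rho(s)>s$.
   Context: For an integer $s\ge2$ and real $r\ge2$ (with $rs-r-s>0$), define \[ L(r,s)=\frac rs\log(s-1)+(r-1)\log(r-1)-\frac{rs-r-s}{s}\log r-\frac{rs-r-s}{s(s-1)}\log(rs-r-s). \] *)

theory Defs
  imports Complex_Main
begin

text \<open>L(r,s) from the paper; log is the natural logarithm. s is an integer (s >= 2).\<close>
definition L :: "real \<Rightarrow> nat \<Rightarrow> real" where
  "L r s = r / real s * ln (real s - 1) + (r - 1) * ln (r - 1)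
     - (r * real s - r - real s) / real s * ln r
     - (r * real s - r - real s) / (real s * (real s - 1)) * ln (r * real s - r - real s)"

end

theory Submission imports Defs "HOL-Analysis.Analysis" begin
definition Dd :: "nat \<Rightarrow> real \<Rightarrow> real" where
 "Dd s r = ln (r-1) - ln r + 1/r + (ln r + ln (real s - 1) - ln (r*real s - r - real s)) / real s"

definition Dd' :: "nat \<Rightarrow> real \<Rightarrow> real" where
 "Dd' s r = 1/(r-1) - 1/r - 1/r^2 + (1/r - (real s - 1)/(r*real s - r - real s)) / real s"

lemma neg_of_prod: "(a::real) * b < 0 \<Longrightarrow> b > 0 \<Longrightarrow> a < 0"
  by (auto simp: mult_less_0_iff)

lemma neg_of_prod2: "(b::real) * a < 0 \<Longrightarrow> b > 0 \<Longrightarrow> a < 0"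
  by (auto simp: mult_less_0_iff)

lemma pos_b: assumes "s \<ge> 5" "r \<ge> (2::real)" shows "r*real s - r - real s > 0"
proof -
  have "r*(real s - 1) \<ge> 2*(real s - 1)" using assms by (intro mult_right_mono) auto
  thus ?thesis using assms by (simp add: algebra_simps)
qed

lemma d_f1: assumes "S \<noteq> (0::real)" shows "((\<lambda>r. r / S * c) has_real_derivative c / S) (at r)"
  using assms by (auto intro!: derivative_eq_intros simp: field_simps)

lemma d_f2: assumes "r > (1::real)" shows "((\<lambda>r. (r - 1) * ln (r - 1)) has_real_derivative ln (r - 1) + 1) (at r)"
  by (rule derivative_eq_intros refl | use assms in simp)+

lemma d_f3: assumes "r > (0::real)" "S \<noteq> 0"
  shows "((\<lambda>r. (r*S - r - S) / S * ln r) has_real_derivative (S - 1)/S * ln r + (r*S - r - S)/(S*r)) (at r)"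
  apply (rule derivative_eq_intros refl | use assms in simp)+
  done

lemma d_f4: assumes "r*S - r - S > (0::real)" "S \<noteq> 0" "S - 1 \<noteq> 0"
  shows "((\<lambda>r. (r*S - r - S) / (S*(S-1)) * ln (r*S - r - S)) has_real_derivative ln (r*S - r - S)/S + 1/S) (at r)"
  apply (rule derivative_eq_intros refl | use assms in simp)+
  done


lemma Dd_eq_aux: fixes S r x y z w :: real assumes "S \<noteq> 0" "r \<noteq> 0"
  shows "x / S + (y + 1) - ((S - 1)/S * z + (r*S - r - S)/(S*r)) - (w/S + 1/S) = y - z + 1/r + (z + x - w)/S"
proof -
  have e1: "(S - 1)/S * z = z - z/S" using assms by (simp add: field_simps)
  have e2: "(r*S - r - S)/(S*r) = 1 - 1/S - 1/r" using assms by (simp add: field_simps)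
  have e3: "(z + x - w)/S = z/S + x/S - w/S" by (simp add: diff_divide_distrib add_divide_distrib)
  show ?thesis unfolding e1 e2 e3 by simp
qed
lemma d_g1: assumes "r > (1::real)" shows "((\<lambda>r. ln (r - 1)) has_real_derivative 1/(r-1)) (at r)"
  by (rule derivative_eq_intros refl | use assms in simp)+
lemma d_g2: assumes "r > (0::real)" shows "((\<lambda>r. ln r) has_real_derivative 1/r) (at r)"
  by (rule derivative_eq_intros refl | use assms in simp)+
lemma d_g3: assumes "r > (0::real)" shows "((\<lambda>r. 1/r) has_real_derivative -1/r^2) (at r)"
  using assms by (auto intro!: derivative_eq_intros simp: field_simps power2_eq_square)
lemma d_g4: assumes "r*S - r - S > (0::real)" "S \<noteq> 0" "r > 0"
  shows "((\<lambda>r. (ln r + c - ln (r*S - r - S))/S) has_real_derivative (1/r - (S-1)/(r*S - r - S))/S) (at r)"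
  apply (rule derivative_eq_intros refl | use assms in simp)+
  done

lemma L_deriv: assumes "s \<ge> 5" "r \<ge> (2::real)"
  shows "((\<lambda>r. L r s) has_real_derivative Dd s r) (at r)"
proof -
  define S where "S = real s"
  have b: "r*S - r - S > 0" using pos_b assms unfolding S_def by blast
  have S0: "S \<noteq> 0" "S - 1 \<noteq> 0" using assms unfolding S_def by auto
  have r: "r > 1" "r \<noteq> 0" "r > 0" using assms by auto
  have fe: "(\<lambda>r. L r s) = (\<lambda>r. r / S * ln (S - 1) + (r - 1) * ln (r - 1) - (r*S - r - S) / S * ln r
     - (r*S - r - S) / (S*(S-1)) * ln (r*S - r - S))"
    unfolding S_def L_def by (simp add: fun_eq_iff)
  have "((\<lambda>r. L r s) has_real_derivative
     ln (S - 1) / S + (ln (r - 1) + 1) - ((S - 1)/S * ln r + (r*S - r - S)/(S*r)) - (ln (r*S - r - S)/S + 1/S)) (at r)"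
    unfolding fe
    by (rule DERIV_diff[OF DERIV_diff[OF DERIV_add[OF d_f1[OF S0(1)] d_f2[OF r(1)]] d_f3[OF r(3) S0(1)]] d_f4[OF b S0]])
  also have "ln (S - 1) / S + (ln (r - 1) + 1) - ((S - 1)/S * ln r + (r*S - r - S)/(S*r)) - (ln (r*S - r - S)/S + 1/S)
     = Dd s r" unfolding Dd_def S_def[symmetric] by (rule Dd_eq_aux[OF S0(1) r(2)])
  finally show ?thesis .
qed

lemma Dd_deriv: assumes "s \<ge> 5" "r \<ge> (2::real)"
  shows "(Dd s has_real_derivative Dd' s r) (at r)"
proof -
  define S where "S = real s"
  have b: "r*S - r - S > 0" using pos_b assms unfolding S_def by blast
  have S0: "S \<noteq> 0" using assms unfolding S_def by auto
  have r: "r > 1" "r > 0" using assms by auto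
  have fe: "Dd s = (\<lambda>r. ln (r-1) - ln r + 1/r + (ln r + ln (S - 1) - ln (r*S - r - S)) / S)"
    unfolding S_def Dd_def by (simp add: fun_eq_iff)
  have "(Dd s has_real_derivative 1/(r-1) - 1/r + -1/r^2 + (1/r - (S-1)/(r*S - r - S))/S) (at r)"
    unfolding fe
    by (rule DERIV_add[OF DERIV_add[OF DERIV_diff[OF d_g1[OF r(1)] d_g2[OF r(2)]] d_g3[OF r(2)]] d_g4[OF b S0 r(2)]])
  also have "1/(r-1) - 1/r + -1/r^2 + (1/r - (S-1)/(r*S - r - S))/S = Dd' s r"
    unfolding Dd'_def S_def[symmetric] by simp
  finally show ?thesis .
qed

lemma Dd'_pos: assumes "s \<ge> 5" "r \<ge> (2::real)" "r \<le> (real s + 1)/2"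
  shows "Dd' s r > 0"
proof -
  have b: "r*real s - r - real s > 0" using pos_b assms by blast
  have eq: "Dd' s r = (real s * r - r^2 - real s) / (r^2*(r-1)*(r*real s - r - real s))"
  proof -
    define B where "B = r*real s - r - real s"
    have Bp: "B > 0" using b B_def by simp
    have r0: "r \<noteq> 0" "r - 1 \<noteq> 0" "real s \<noteq> 0" using assms by auto
    have e1: "1/(r-1) - 1/r - 1/r^2 = 1/(r^2*(r-1))" using r0 by (simp add: field_simps power2_eq_square)
    have e2: "(1/r - (real s - 1)/B)/real s = (B - (real s - 1)*r)/(r*B*real s)" using r0 Bp by (simp add: field_simps)
    have e3: "B - (real s - 1)*r = - real s" unfolding B_def by (simp add: algebra_simps)
    have e4: "1/(r^2*(r-1)) - 1/(r*B) = (B - r*(r-1))/(r^2*(r-1)*B)" using r0 Bp by (simp add: field_simps power2_eq_square)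
    have "Dd' s r = 1/(r^2*(r-1)) - 1/(r*B)" unfolding Dd'_def B_def[symmetric] e2 e3 using r0 e1 by simp
    also have "\<dots> = (B - r*(r-1))/(r^2*(r-1)*B)" by (rule e4)
    also have "B - r*(r-1) = real s * r - r^2 - real s" unfolding B_def by (simp add: algebra_simps power2_eq_square)
    finally show ?thesis unfolding B_def .
  qed
  have "(r-2)*(r - (real s + 1)/2) \<le> 0" using assms by (intro mult_nonneg_nonpos) auto
  moreover have "(r-2)*(r - (real s + 1)/2) = r*r - real s*r/2 - 5*r/2 + real s + 1" by (simp add: field_simps)
  moreover have "real s * r \<ge> 5 * r" using assms by (intro mult_right_mono) auto
  ultimately have "real s * r - r^2 - real s > 0" using assms unfolding power2_eq_square by linarith
  moreover have "r^2*(r-1)*(r*real s - r - real s) > 0" using assms b by simp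
  ultimately show ?thesis unfolding eq by simp
qed

lemma Dd_pos_large: assumes "s \<ge> 5" "r \<ge> (2::real)" "r \<ge> (real s + 1)/2"
  shows "Dd s r > 0"
proof -
  have b: "r*real s - r - real s > 0" using pos_b assms by blast
  have s1: "real s - 1 > 0" using assms by simp
  have h1: "ln (r - 1 + 1) - ln (r-1) \<le> 1 * (inverse (r-1) + inverse (r - 1 + 1))/2"
    using ln_inverse_approx_le[of "r-1" 1] assms by simp
  have h2: "ln (r*real s - r) - ln (r*real s - r - real s) \<ge> 2 * ((r*real s - r) - (r*real s - r - real s)) / ((r*real s - r - real s) + (r*real s - r))"
    using ln_inverse_approx_ge[of "r*real s - r - real s" "r*real s - r"] assms b by simp
  have lnra: "ln (r*real s - r) = ln r + ln (real s - 1)"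
    using ln_mult_pos[of r "real s - 1"] assms s1 by (simp add: algebra_simps)
  have "Dd s r \<ge> -(inverse (r-1) + inverse r)/2 + 1/r + 2 / (2*(r*real s - r) - real s)"
  proof -
    have "(ln r + ln (real s - 1) - ln (r*real s - r - real s)) / real s \<ge> 2 / (2*(r*real s - r) - real s)"
      using h2 lnra assms by (simp add: field_simps)
    moreover have "ln r - ln (r-1) \<le> (inverse (r-1) + inverse r)/2" using h1 by simp
    ultimately show ?thesis unfolding Dd_def by linarith
  qed
  moreover have "-(inverse (r-1) + inverse r)/2 + 1/r = - 1/(2*r*(r-1))"
    using assms by (simp add: field_simps)
  moreover have "2 / (2*(r*real s - r) - real s) > 1/(2*r*(r-1))"
  proof -
    have p: "2*(r*real s - r) - real s > 0" using b by simp
    have "2*r*(2*r - (real s+1)) \<ge> 0" using assms by (intro mult_nonneg_nonneg) auto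
    hence "4*r*r \<ge> 2*r*(real s + 1)" by (simp add: algebra_simps)
    hence "2*r*(r-1)*2 > 2*(r*real s - r) - real s" using assms by (simp add: algebra_simps)
    thus ?thesis using p assms by (simp add: field_simps)
  qed
  ultimately show ?thesis by linarith
qed

lemma Dd_mono: assumes "s \<ge> 5" "2 \<le> x" "x < y" "Dd s x \<ge> 0"
  shows "Dd s y > 0"
proof (cases "y \<ge> (real s + 1)/2")
  case True thus ?thesis using Dd_pos_large assms by auto
next
  case False
  have "Dd s x < Dd s y"
    apply (rule DERIV_pos_imp_increasing[OF assms(3)])
    using Dd_deriv Dd'_pos assms False by (metis less_eq_real_def order.trans not_le)
  thus ?thesis using assms by linarith
qed

lemma ident_aux:
  fixes S r x y z :: real assumes nz: "S \<noteq> 0" "S - 1 \<noteq> 0"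
  shows "r / S * y + (r - 1) * z - (r*S - r - S) / S * x - (r*S - r - S)/(S*(S - 1)) * (x + y)
       = y/(S - 1) + (r-1)*(z - x) + x/(S - 1)"
proof -
  define K where "K = r*S - r - S"
  have c1: "r/S - K/(S*(S-1)) = 1/(S-1)" unfolding K_def using nz by (simp add: field_simps) (simp add: algebra_simps)?
  have c2: "K/S + K/(S*(S-1)) = (r-1) - 1/(S-1)" unfolding K_def using nz by (simp add: field_simps) (simp add: algebra_simps)?
  have "r / S * y + (r - 1) * z - K / S * x - K/(S*(S - 1)) * (x + y)
      = y*(r/S - K/(S*(S-1))) + (r-1)*z - x*(K/S + K/(S*(S-1)))"
  proof -
    have "\<And>c d e. e*y + (r-1)*z - d*x - c*(x+y) = y*(e - c) + (r-1)*z - x*(d + c)" by (simp add: algebra_simps)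
    thus ?thesis .
  qed
  also have "\<dots> = y*(1/(S-1)) + (r-1)*z - x*((r-1) - 1/(S-1))" unfolding c1 c2 ..
  also have "\<dots> = y/(S - 1) + (r-1)*(z - x) + x/(S - 1)" by (simp add: algebra_simps)
  finally show ?thesis unfolding K_def .
qed

lemma L_big: assumes "s \<ge> 5" "r \<ge> (2::real)"
  shows "L r s > (ln (real s - 1) + ln r)/(real s - 1) - 1"
proof -
  define B where "B = r*real s - r - real s"
  have Bp: "B > 0" unfolding B_def
  proof -
    have "r*(real s - 1) \<ge> 2*(real s - 1)" using assms by (intro mult_right_mono) auto
    thus "r*real s - r - real s > 0" using assms by (simp add: algebra_simps)
  qed
  have a0: "real s - 1 > 0" using assms by simp
  have lnB: "ln B < ln r + ln (real s - 1)"
  proof -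
    have "B < r*(real s - 1)" unfolding B_def using assms by (simp add: algebra_simps)
    hence "ln B < ln (r*(real s - 1))" using Bp by simp
    thus ?thesis using ln_mult_pos[of r "real s - 1"] assms a0 by simp
  qed
  have lr: "ln r - ln (r-1) \<le> 1/(r-1)"
  proof -
    have "ln (r/(r-1)) \<le> r/(r-1) - 1" using assms by (intro ln_le_minus_one) auto
    moreover have "ln (r/(r-1)) = ln r - ln (r-1)" using assms by (intro ln_divide_pos) auto
    moreover have "r/(r-1) - 1 = 1/(r-1)" using assms by (simp add: field_simps)
    ultimately show ?thesis by simp
  qed
  hence lr': "(r-1)*(ln (r-1) - ln r) \<ge> -1" using assms by (simp add: field_simps)
  have cB: "B/(real s*(real s - 1)) > 0" using Bp a0 assms by simp
  have "L r s = r / real s * ln (real s - 1) + (r - 1) * ln (r - 1) - B / real s * ln r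
       - B/(real s*(real s - 1)) * ln B" unfolding L_def B_def by simp
  also have "\<dots> > r / real s * ln (real s - 1) + (r - 1) * ln (r - 1) - B / real s * ln r
       - B/(real s*(real s - 1)) * (ln r + ln (real s - 1))"
    using mult_strict_left_mono[OF lnB cB] by simp
  also have "r / real s * ln (real s - 1) + (r - 1) * ln (r - 1) - B / real s * ln r
       - B/(real s*(real s - 1)) * (ln r + ln (real s - 1))
       = ln (real s - 1)/(real s - 1) + (r-1)*(ln (r-1) - ln r) + ln r/(real s - 1)"
  proof -
    have nz: "real s \<noteq> 0" "real s - 1 \<noteq> 0" using a0 by auto
    show ?thesis unfolding B_def by (rule ident_aux[OF nz])
  qed
  finally show ?thesis using lr' by (simp add: add_divide_distrib)
qed

lemma pow2_aux: "m \<ge> 7 \<Longrightarrow> (m::nat)^2 < 2^(m-1)"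
proof (induction m rule: dec_induct)
  case base thus ?case by simp
next
  case (step n)
  have "7*n \<le> n*n" using step(1) by (intro mult_right_mono) auto
  hence h: "2*n + 1 \<le> n*n" using step(1) by linarith
  have "(Suc n)^2 = n*n + (2*n+1)" by (simp add: power2_eq_square)
  hence "(Suc n)^2 \<le> 2*n^2" using h by (simp add: power2_eq_square)
  also have "\<dots> < 2*2^(n-1)" using step(3) by simp
  also have "\<dots> = 2^(Suc n - 1)" using step(1) by (cases n) auto
  finally show ?case .
qed

lemma nat2: "m \<ge> 4 \<Longrightarrow> (m::nat)^(2*m) < 2^(m*(m-1)) * (m-1)^(m-1)"
proof -
  assume m: "m \<ge> 4"
  show ?thesis
  proof (cases "m \<ge> 7")
    case True
    have "m^(2*m) = (m^2)^m" by (simp add: power_mult)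
    also have "\<dots> < (2^(m-1))^m" using pow2_aux[OF True] m by (intro power_strict_mono) auto
    also have "\<dots> = 2^(m*(m-1))" by (simp add: power_mult[symmetric] mult.commute)
    also have "\<dots> \<le> 2^(m*(m-1)) * (m-1)^(m-1)" using m by simp
    finally show ?thesis .
  next
    case False
    hence "m = 4 \<or> m = 5 \<or> m = 6" using m by auto
    thus ?thesis by auto
  qed
qed

lemma L2_neg: assumes "s \<ge> 5" shows "L 2 s < 0"
proof -
  define m where "m = s - 1"
  have m4: "m \<ge> 4" using assms m_def by simp
  have rm: "real s - 1 = real m" "real s - 2 = real m - 1" "real (m - 1) = real m - 1" using assms m_def by (auto simp: of_nat_diff)
  have "real (m^(2*m)) < real (2^(m*(m-1)) * (m-1)^(m-1))" using nat2[OF m4] by (simp only: of_nat_less_iff)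
  hence "real m^(2*m) < 2^(m*(m-1)) * (real m - 1)^(m-1)" using rm by simp
  hence "ln (real m^(2*m)) < ln (2^(m*(m-1)) * (real m - 1)^(m-1))" using m4 by (subst ln_less_cancel_iff) auto
  hence key: "2*real m*ln (real m) < real m*(real m - 1)*ln 2 + (real m - 1)*ln (real m - 1)"
    using m4 rm by (simp add: ln_mult_pos ln_realpow of_nat_diff)
  have e: "2 * real s - 2 - real s = real s - 2" by simp
  have "L 2 s * (real s * (real s - 1)) = 2*(real s - 1)*ln (real s - 1) - (real s - 1)*(real s - 2)*ln 2 - (real s - 2)*ln (real s - 2)"
    using assms unfolding L_def e by (simp add: field_simps)
  also have "\<dots> < 0" using key rm by simp
  finally have "L 2 s * (real s * (real s - 1)) < 0" .
  moreover have "real s * (real s - 1) > 0" using assms by simp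
  ultimately show ?thesis using neg_of_prod by blast
qed

lemma natS: "m \<in> {5..10} \<Longrightarrow> (m::nat)^((m+1)*m) < (m+1)^((m+1)*(m-1)) * (m-1)^(m-1)"
proof -
  assume "m \<in> {5..10}"
  hence "m = 5 \<or> m = 6 \<or> m = 7 \<or> m = 8 \<or> m = 9 \<or> m = 10" by auto
  thus ?thesis by auto
qed

lemma e27: "exp 1 > (27/10::real)"
  using e_approx_32 by (simp add: abs_if split: if_split_asm)

lemma Ls_key: assumes "s \<ge> 6"
  shows "real s*(real s - 1)*ln (real s - 1) < real s*(real s - 2)*ln (real s) + (real s - 2)*ln (real s - 2)"
proof (cases "s \<le> 11")
  case True
  define m where "m = s - 1"
  have mr: "m \<in> {5..10}" using True assms m_def by auto
  have rm: "real s - 1 = real m" "real s - 2 = real m - 1" "real (m - 1) = real m - 1" "real s = real m + 1"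
    "real (m+1) = real m + 1"
    using assms m_def by (auto simp: of_nat_diff)
  have "real (m^((m+1)*m)) < real ((m+1)^((m+1)*(m-1)) * (m-1)^(m-1))" using natS[OF mr] by (simp only: of_nat_less_iff)
  hence "real m^((m+1)*m) < (real m + 1)^((m+1)*(m-1)) * (real m - 1)^(m-1)" using rm by (simp add: add.commute)
  hence "ln (real m^((m+1)*m)) < ln ((real m + 1)^((m+1)*(m-1)) * (real m - 1)^(m-1))" using mr by (subst ln_less_cancel_iff) auto
  hence "(real m + 1)*real m*ln (real m) < (real m + 1)*(real m - 1)*ln (real m + 1) + (real m - 1)*ln (real m - 1)"
    using mr rm by (simp add: ln_mult_pos ln_realpow of_nat_diff) (simp add: algebra_simps)
  thus ?thesis using rm by simp
next
  case False
  hence s12: "real s \<ge> 12" by simp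
  have h1: "ln (real s - 1) - ln (real s) \<le> -1/real s"
  proof -
    have "ln ((real s - 1)/real s) \<le> (real s - 1)/real s - 1" using s12 by (intro ln_le_minus_one) auto
    moreover have "ln ((real s - 1)/real s) = ln (real s - 1) - ln (real s)" using s12 by (intro ln_divide_pos) auto
    moreover have "(real s - 1)/real s - 1 = -1/real s" using s12 by (simp add: field_simps)
    ultimately show ?thesis by simp
  qed
  have h2: "ln (real s) - ln (real s - 2) \<le> 2/(real s - 2)"
  proof -
    have "ln (real s/(real s - 2)) \<le> real s/(real s - 2) - 1" using s12 by (intro ln_le_minus_one) auto
    moreover have "ln (real s/(real s - 2)) = ln (real s) - ln (real s - 2)" using s12 by (intro ln_divide_pos) auto
    moreover have "real s/(real s - 2) - 1 = 2/(real s - 2)" using s12 by (simp add: field_simps)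
    ultimately show ?thesis by simp
  qed
  have h3: "ln (real s) \<le> real s / exp 1"
  proof -
    have "ln (real s / exp 1) \<le> real s / exp 1 - 1" using s12 by (intro ln_le_minus_one) auto
    moreover have "ln (real s / exp 1) = ln (real s) - 1" using s12 by (simp add: ln_divide_pos)
    ultimately show ?thesis by simp
  qed
  have h4: "real s / exp 1 < real s / (27/10)" using e27 s12 by (intro divide_strict_left_mono) auto
  have A: "real s*(real s - 1)*(ln (real s - 1) - ln (real s)) \<le> -(real s - 1)"
  proof -
    have "real s*(real s - 1)*(ln (real s - 1) - ln (real s)) \<le> real s*(real s - 1)*(-1/real s)"
      using h1 s12 by (intro mult_left_mono) auto
    also have "\<dots> = -(real s - 1)" using s12 by (simp add: field_simps)
    finally show ?thesis .
  qed
  have B: "(real s - 2)*(ln (real s) - ln (real s - 2)) \<le> 2"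
  proof -
    have "(real s - 2)*(ln (real s) - ln (real s - 2)) \<le> (real s - 2)*(2/(real s - 2))"
      using h2 s12 by (intro mult_left_mono) auto
    also have "\<dots> = 2" using s12 by (simp add: field_simps)
    finally show ?thesis .
  qed
  have id: "real s*(real s - 1)*ln (real s - 1) - (real s*(real s - 2)*ln (real s) + (real s - 2)*ln (real s - 2))
    = real s*(real s - 1)*(ln (real s - 1) - ln (real s)) + 2*ln (real s) + (real s - 2)*(ln (real s) - ln (real s - 2))"
    by (simp add: algebra_simps)
  have h5: "real s / exp 1 < 10*real s/27" using h4 by simp
  have gen: "\<And>X Y l e S::real. X \<le> -(S-1) \<Longrightarrow> Y \<le> 2 \<Longrightarrow> l \<le> e \<Longrightarrow> e < 10*S/27 \<Longrightarrow> S \<ge> 12 \<Longrightarrow> X + 2*l + Y < 0"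
    by linarith
  have "real s*(real s - 1)*ln (real s - 1) - (real s*(real s - 2)*ln (real s) + (real s - 2)*ln (real s - 2)) < 0"
    unfolding id by (rule gen[OF A B h3 h5 s12])
  thus ?thesis by simp
qed

lemma Ls_neg: assumes "s \<ge> 6" shows "L (real s) s < 0"
proof -
  have s6: "real s \<ge> 6" using assms by simp
  have e: "real s * real s - real s - real s = real s * (real s - 2)" by (simp add: algebra_simps)
  have l: "ln (real s * (real s - 2)) = ln (real s) + ln (real s - 2)" using s6 by (simp add: ln_mult_pos)
  have nz: "real s \<noteq> 0" "real s - 1 \<noteq> 0" using s6 by auto
  have "(real s - 1) * L (real s) s = real s*(real s - 1)*ln (real s - 1) - (real s*(real s - 2)*ln (real s) + (real s - 2)*ln (real s - 2))"
    unfolding L_def e l using nz by (simp add: field_simps) (simp add: algebra_simps)?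
  also have "\<dots> < 0" using Ls_key[OF assms] by simp
  finally have "(real s - 1) * L (real s) s < 0" .
  moreover have "real s - 1 > 0" using s6 by simp
  ultimately show ?thesis using neg_of_prod2 by blast
qed

theorem lemma6p2:
  fixes s :: nat
  assumes "s \<ge> 5"
  shows "\<exists>\<rho>::real. \<rho> > 2 \<and> L \<rho> s = 0
           \<and> (\<forall>\<rho>'. \<rho>' > 2 \<and> L \<rho>' s = 0 \<longrightarrow> \<rho>' = \<rho>)
           \<and> (\<forall>r. 2 \<le> r \<and> r < \<rho> \<longrightarrow> L r s < 0)
           \<and> (\<forall>r. \<rho> < r \<longrightarrow> L r s > 0)
           \<and> (s \<ge> 6 \<longrightarrow> \<rho> > real s)"
proof -
  have Dc: "isCont (Dd s) r" if "r \<ge> 2" for r using Dd_deriv[OF assms that] by (rule DERIV_isCont)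
  have Lc: "isCont (\<lambda>r. L r s) r" if "r \<ge> 2" for r using L_deriv[OF assms that] by (rule DERIV_isCont)
  obtain c where c2: "c \<ge> 2" and cneg: "\<And>r. 2 \<le> r \<Longrightarrow> r < c \<Longrightarrow> Dd s r < 0"
    and cpos: "\<And>r. c < r \<Longrightarrow> Dd s r > 0"
  proof (cases "Dd s 2 \<ge> 0")
    case True
    show ?thesis
    proof (rule that[of 2])
      show "Dd s r > 0" if "2 < r" for r by (rule Dd_mono[OF assms _ that True]) simp
      show "2 \<le> (2::real)" by simp
      show "Dd s r < 0" if "2 \<le> r" "r < 2" for r using that by linarith
    qed
  next
    case False
    define R where "R = (real s + 1)/2 + 2"
    have R2: "R \<ge> 2" "R \<ge> (real s + 1)/2" unfolding R_def by auto
    have "Dd s R > 0" using Dd_pos_large[OF assms R2] .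
    have "\<exists>x. 2 \<le> x \<and> x \<le> R \<and> Dd s x = 0"
      apply (rule IVT)
      using False R2 \<open>Dd s R > 0\<close> Dc by auto
    then obtain c where c: "2 \<le> c" "c \<le> R" "Dd s c = 0" by blast
    show ?thesis
    proof (rule that[of c])
      show "2 \<le> c" by fact
      show "Dd s r < 0" if "2 \<le> r" "r < c" for r
      proof (rule ccontr)
        assume "\<not> Dd s r < 0"
        hence "Dd s r \<ge> 0" by linarith
        hence "Dd s c > 0" by (rule Dd_mono[OF assms that(1) that(2)])
        thus False using c(3) by linarith
      qed
      show "Dd s r > 0" if "c < r" for r
      proof (rule Dd_mono[OF assms c(1) that])
        show "Dd s c \<ge> 0" using c(3) by linarith
      qed
    qed
  qed
  have Lcon: "continuous_on {x..y} (\<lambda>r. L r s)" if "x \<ge> 2" for x y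
  proof (rule continuous_at_imp_continuous_on, rule ballI)
    fix t assume "t \<in> {x..y}"
    hence "t \<ge> 2" using that by simp
    thus "isCont (\<lambda>r. L r s) t" by (rule Lc)
  qed
  have Ldec: "L r s \<le> L 2 s" if "2 \<le> r" "r \<le> c" for r
  proof (cases "r = 2")
    case True thus ?thesis by simp
  next
    case False
    show ?thesis
    proof (rule DERIV_nonpos_imp_decreasing_open[of 2 r "\<lambda>r. L r s"])
      show "2 \<le> r" by fact
      show "continuous_on {2..r} (\<lambda>r. L r s)" using Lcon by simp
      show "\<exists>y. ((\<lambda>r. L r s) has_real_derivative y) (at x) \<and> y \<le> 0" if "2 < x" "x < r" for x
        using L_deriv[OF assms, of x] cneg[of x] that \<open>r \<le> c\<close> by (intro exI[of _ "Dd s x"]) auto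
    qed
  qed
  have Linc: "L x s < L y s" if "c \<le> x" "x < y" for x y
  proof (rule DERIV_pos_imp_increasing_open[of x y "\<lambda>r. L r s"])
    show "x < y" by fact
    show "continuous_on {x..y} (\<lambda>r. L r s)" using Lcon[of x y] that c2 by simp
    show "\<exists>d. ((\<lambda>r. L r s) has_real_derivative d) (at t) \<and> d > 0" if "x < t" "t < y" for t
      using L_deriv[OF assms, of t] cpos[of t] that \<open>c \<le> x\<close> c2 by (intro exI[of _ "Dd s t"]) auto
  qed
  have L2: "L 2 s < 0" using L2_neg[OF assms] .
  define R where "R = exp (real s - 1)"
  have R2: "R \<ge> 2"
  proof -
    have "exp (real s - 1) \<ge> 1 + (real s - 1)" by (rule exp_ge_add_one_self)
    thus ?thesis unfolding R_def using assms by simp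
  qed
  have LR: "L R s > 0"
  proof -
    have h: "L R s > (ln (real s - 1) + ln R)/(real s - 1) - 1" using L_big[OF assms R2] .
    have eq: "(ln (real s - 1) + ln R)/(real s - 1) - 1 = ln (real s - 1)/(real s - 1)"
      unfolding R_def using assms by (simp add: field_simps)
    have p: "ln (real s - 1)/(real s - 1) > 0" using assms by simp
    show ?thesis using h eq p by linarith
  qed
  have cR: "c < R"
  proof (rule ccontr)
    assume "\<not> c < R"
    hence "L R s \<le> L 2 s" using Ldec R2 by simp
    thus False using L2 LR by simp
  qed
  have Lcneg: "L c s < 0" using Ldec[of c] c2 L2 by simp
  have "\<exists>x. c \<le> x \<and> x \<le> R \<and> L x s = 0"
    apply (rule IVT[of "\<lambda>r. L r s"])
    using Lcneg LR cR c2 Lc by auto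
  then obtain \<rho> where \<rho>: "c \<le> \<rho>" "\<rho> \<le> R" "L \<rho> s = 0" by blast
  have \<rho>c: "\<rho> > c" using \<rho> Lcneg by (cases "\<rho> = c") auto
  have neg: "L r s < 0" if "2 \<le> r" "r < \<rho>" for r
  proof (cases "r \<le> c")
    case True thus ?thesis using Ldec[OF that(1) True] L2 by simp
  next
    case False thus ?thesis using Linc[of r \<rho>] that \<rho> by simp
  qed
  have pos: "L r s > 0" if "\<rho> < r" for r using Linc[of \<rho> r] that \<rho> by simp
  show ?thesis
  proof (intro exI[of _ \<rho>] conjI allI impI)
    show "\<rho> > 2" using \<rho>c c2 by simp
    show "L \<rho> s = 0" by fact
    show "\<rho>' = \<rho>" if "2 < \<rho>' \<and> L \<rho>' s = 0" for \<rho>'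
    proof -
      have "\<not> \<rho>' < \<rho>" using neg[of \<rho>'] that by force
      moreover have "\<not> \<rho> < \<rho>'" using pos[of \<rho>'] that by force
      ultimately show ?thesis by simp
    qed
    show "L r s < 0" if "2 \<le> r \<and> r < \<rho>" for r using neg that by simp
    show "L r s > 0" if "\<rho> < r" for r using pos that by simp
    show "\<rho> > real s" if "s \<ge> 6"
    proof (rule ccontr)
      assume "\<not> \<rho> > real s"
      hence "\<rho> = real s \<or> \<rho> < real s" by auto
      thus False using Ls_neg[OF that] pos[of "real s"] \<rho> by auto
    qed
  qed
qed

end
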